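(* Let $m\ge 1$, let $y_1,\dots,y_m$ be distinct integers each less than $-1$, and let $D=\{1,y_1,\dots,y_m\}$. If $(T,s)$ is a signed tree that realizes $D$, then $diam(T)\ge 4$ if $m=1$, $diam(T)\ge 5$ if $m=2$, and $diam(T)\ge 6$ if $m>2$.
   Context: A signed tree is a pair $(T,s)$ where $T$ is a finite tree and $s:E(T)\to\{+,-\}$. The signed degree $sdeg(v)$ of a vertex is the number of incident positive edges minus the number of incident negative edges. $(T,s)$ realizes $D$ if $D=\{sdeg(v):v\in V(T)\}$. $diam(T)$ denotes the diameter of $T$. *)

theory Defs
  imports Main
begin

definition simple_graph :: "'a set \<Rightarrow> 'a set set \<Rightarrow> bool" where
  "simple_graph V E \<longleftrightarrow> finite V \<and> (\<forall>e\<in>E. \<exists>u v. u \<in> V \<and> v \<in> V \<and> u \<noteq> v \<and> e = {u, v})"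

definition is_walk :: "'a set set \<Rightarrow> 'a list \<Rightarrow> bool" where
  "is_walk E p \<longleftrightarrow> p \<noteq> [] \<and> (\<forall>i. Suc i < length p \<longrightarrow> {p ! i, p ! Suc i} \<in> E)"

definition connected_graph :: "'a set \<Rightarrow> 'a set set \<Rightarrow> bool" where
  "connected_graph V E \<longleftrightarrow> V \<noteq> {} \<and>
     (\<forall>u\<in>V. \<forall>v\<in>V. \<exists>p. is_walk E p \<and> hd p = u \<and> last p = v)"

definition is_cycle :: "'a set set \<Rightarrow> 'a list \<Rightarrow> bool" where
  "is_cycle E c \<longleftrightarrow> length c \<ge> 3 \<and> distinct c \<and> is_walk E c \<and> {last c, hd c} \<in> E"

definition acyclic_graph :: "'a set set \<Rightarrow> bool" where
  "acyclic_graph E \<longleftrightarrow> \<not> (\<exists>c. is_cycle E c)"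

definition is_tree :: "'a set \<Rightarrow> 'a set set \<Rightarrow> bool" where
  "is_tree V E \<longleftrightarrow> simple_graph V E \<and> connected_graph V E \<and> acyclic_graph E"

definition gdist :: "'a set set \<Rightarrow> 'a \<Rightarrow> 'a \<Rightarrow> nat" where
  "gdist E u v = (LEAST n. \<exists>p. is_walk E p \<and> hd p = u \<and> last p = v \<and> length p = Suc n)"

definition diam :: "'a set \<Rightarrow> 'a set set \<Rightarrow> nat" where
  "diam V E = Max {gdist E u v | u v. u \<in> V \<and> v \<in> V}"

text \<open>Signing: s e = True means e is positive, False means negative.\<close>

definition sdeg :: "'a set set \<Rightarrow> ('a set \<Rightarrow> bool) \<Rightarrow> 'a \<Rightarrow> int" where
  "sdeg E s v = int (card {e\<in>E. v \<in> e \<and> s e}) - int (card {e\<in>E. v \<in> e \<and> \<not> s e})"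

definition realizes :: "'a set \<Rightarrow> 'a set set \<Rightarrow> ('a set \<Rightarrow> bool) \<Rightarrow> int set \<Rightarrow> bool" where
  "realizes V E s D \<longleftrightarrow> D = sdeg E s ` V"

end

theory Submission
  imports Defs
begin


lemma walk_Cons_iff:
  assumes "p \<noteq> []"
  shows "is_walk F (x # p) \<longleftrightarrow> {x, hd p} \<in> F \<and> is_walk F p"
proof
  assume H: "is_walk F (x # p)"
  then have H': "\<And>i. Suc i < length (x # p) \<Longrightarrow> {(x # p) ! i, (x # p) ! Suc i} \<in> F"
    unfolding is_walk_def by blast
  have "{(x # p) ! 0, (x # p) ! Suc 0} \<in> F" using H'[of 0] assms by simp
  then have "{x, hd p} \<in> F" using assms by (simp add: hd_conv_nth)
  moreover have "is_walk F p" unfolding is_walk_def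
  proof (intro conjI allI impI)
    fix i assume "Suc i < length p"
    then have "Suc (Suc i) < length (x # p)" by simp
    from H'[OF this] show "{p ! i, p ! Suc i} \<in> F" by simp
  qed (rule assms)
  ultimately show "{x, hd p} \<in> F \<and> is_walk F p" by blast
next
  assume H: "{x, hd p} \<in> F \<and> is_walk F p"
  then have H': "\<And>i. Suc i < length p \<Longrightarrow> {p ! i, p ! Suc i} \<in> F"
    unfolding is_walk_def by blast
  show "is_walk F (x # p)" unfolding is_walk_def
  proof (intro conjI allI impI)
    fix i assume i: "Suc i < length (x # p)"
    show "{(x # p) ! i, (x # p) ! Suc i} \<in> F"
    proof (cases i)
      case 0 then show ?thesis using H assms by (simp add: hd_conv_nth)
    next
      case (Suc j) then show ?thesis using H'[of j] i by simp
    qed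
  qed simp
qed

lemma walk_single: "is_walk F [x]" unfolding is_walk_def by simp

lemma walk_edge_sub: "is_walk F p \<Longrightarrow> Suc i < length p \<Longrightarrow> {p!i, p!Suc i} \<in> F"
  unfolding is_walk_def by blast

lemma walk_rev: "is_walk F p \<Longrightarrow> is_walk F (rev p)"
proof -
  assume H: "is_walk F p"
  show ?thesis unfolding is_walk_def
  proof (intro conjI allI impI)
    show "rev p \<noteq> []" using H unfolding is_walk_def by simp
  next
    fix i assume i: "Suc i < length (rev p)"
    define k where "k = length p - Suc (Suc i)"
    have k: "Suc k < length p" using i k_def by simp
    have e: "{p ! k, p ! Suc k} \<in> F" using walk_edge_sub[OF H k] .
    have "rev p ! i = p ! (length p - Suc i)" using i by (simp add: rev_nth)
    also have "length p - Suc i = Suc k" using i k_def by simp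
    finally have 1: "rev p ! i = p ! Suc k" .
    have "rev p ! Suc i = p ! (length p - Suc (Suc i))" using i by (simp add: rev_nth)
    then have 2: "rev p ! Suc i = p ! k" using k_def by simp
    show "{rev p ! i, rev p ! Suc i} \<in> F" using e 1 2 by (simp add: insert_commute)
  qed
qed

lemma walk_drop: "is_walk F p \<Longrightarrow> k < length p \<Longrightarrow> is_walk F (drop k p)"
proof -
  assume H: "is_walk F p" and k: "k < length p"
  show ?thesis unfolding is_walk_def
  proof (intro conjI allI impI)
    show "drop k p \<noteq> []" using k by simp
  next
    fix i assume i: "Suc i < length (drop k p)"
    then have "Suc (k + i) < length p" by simp
    from walk_edge_sub[OF H this] show "{drop k p ! i, drop k p ! Suc i} \<in> F"
      using k i by simp
  qed
qed

lemma walk_take: "is_walk F p \<Longrightarrow> 0 < k \<Longrightarrow> is_walk F (take k p)"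
proof -
  assume H: "is_walk F p" and k: "0 < k"
  show ?thesis unfolding is_walk_def
  proof (intro conjI allI impI)
    show "take k p \<noteq> []" using k H unfolding is_walk_def by simp
  next
    fix i assume i: "Suc i < length (take k p)"
    then have "Suc i < length p" by simp
    from walk_edge_sub[OF H this] show "{take k p ! i, take k p ! Suc i} \<in> F"
      using i by simp
  qed
qed



lemma walk_append: "is_walk F p \<Longrightarrow> is_walk F q \<Longrightarrow> last p = hd q \<Longrightarrow>
   is_walk F (p @ tl q) \<and> hd (p @ tl q) = hd p \<and> last (p @ tl q) = last q"
proof (induction p)
  case Nil then show ?case by (simp add: is_walk_def)
next
  case (Cons x p)
  have qne: "q \<noteq> []" using Cons.prems(2) unfolding is_walk_def by blast
  show ?case
  proof (cases "p = []")
    case True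
    have hq: "hd q = x" using Cons.prems(3) True by simp
    have "x # tl q = q" using qne hq by (cases q) simp_all
    then have eq: "(x # p) @ tl q = q" using True by simp
    show ?thesis unfolding eq using Cons.prems(2) hq True by simp
  next
    case False
    have w: "is_walk F p" "{x, hd p} \<in> F" using Cons.prems(1) walk_Cons_iff[OF False] by blast+
    have lp: "last p = hd q" using Cons.prems(3) False by simp
    have IH: "is_walk F (p @ tl q) \<and> hd (p @ tl q) = hd p \<and> last (p @ tl q) = last q"
      by (rule Cons.IH[OF w(1) Cons.prems(2) lp])
    have ne: "p @ tl q \<noteq> []" using False by simp
    have "hd (p @ tl q) = hd p" using False by simp
    then have "is_walk F (x # (p @ tl q))" using walk_Cons_iff[OF ne, of F x] IH w(2) by simp
    moreover have "last ((x # p) @ tl q) = last q" using IH False by simp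
    ultimately show ?thesis by simp
  qed
qed

lemma shortcut:
  "is_walk F p \<Longrightarrow> \<exists>q. is_walk F q \<and> distinct q \<and> hd q = hd p \<and> last q = last p"
proof (induction p)
  case Nil then show ?case by (simp add: is_walk_def)
next
  case (Cons x p)
  show ?case
  proof (cases "p = []")
    case True then show ?thesis by (intro exI[of _ "[x]"]) (simp add: walk_single)
  next
    case False
    then have w: "is_walk F p" "{x, hd p} \<in> F" using Cons.prems walk_Cons_iff[OF False] by blast+
    then obtain q where q: "is_walk F q" "distinct q" "hd q = hd p" "last q = last p"
      using Cons.IH by blast
    have qne: "q \<noteq> []" using q(1) unfolding is_walk_def by blast
    have lx: "last (x # p) = last q" using q(4) False by simp
    show ?thesis
    proof (cases "x \<in> set q")
      case True
      then obtain k where k: "k < length q" "q ! k = x" by (metis in_set_conv_nth)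
      have "is_walk F (drop k q)" using walk_drop q(1) k(1) by blast
      moreover have "hd (drop k q) = x" using k by (simp add: hd_drop_conv_nth)
      moreover have "last (drop k q) = last q" using k by simp
      moreover have "distinct (drop k q)" using q by simp
      ultimately show ?thesis using lx by (intro exI[of _ "drop k q"]) simp
    next
      case False
      have "is_walk F (x # q)" using walk_Cons_iff[OF qne] w(2) q(1,3) by simp
      then show ?thesis using False q(2) qne lx by (intro exI[of _ "x # q"]) simp
    qed
  qed
qed



lemma edge_info: "simple_graph V E \<Longrightarrow> {x,y} \<in> E \<Longrightarrow> x \<noteq> y \<and> x \<in> V \<and> y \<in> V"
proof -
  assume sg: "simple_graph V E" and e: "{x,y} \<in> E"
  then obtain u v where uv: "u \<in> V" "v \<in> V" "u \<noteq> v" "{x,y} = {u,v}"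
    unfolding simple_graph_def by blast
  then show ?thesis by (auto simp: doubleton_eq_iff)
qed

lemma edge_other: "simple_graph V E \<Longrightarrow> e \<in> E \<Longrightarrow> x \<in> e \<Longrightarrow> \<exists>z. e = {x,z} \<and> z \<noteq> x \<and> x \<in> V \<and> z \<in> V"
proof -
  assume sg: "simple_graph V E" and e: "e \<in> E" and x: "x \<in> e"
  then obtain u v where uv: "u \<in> V" "v \<in> V" "u \<noteq> v" "e = {u,v}"
    unfolding simple_graph_def by blast
  show ?thesis
  proof (cases "x = u")
    case True then show ?thesis using uv by blast
  next
    case False then have "x = v" using x uv by blast
    then show ?thesis using uv by (intro exI[of _ u]) (auto simp: insert_commute)
  qed
qed

lemma walk_mono: "is_walk F p \<Longrightarrow> F \<subseteq> G \<Longrightarrow> is_walk G p"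
  unfolding is_walk_def by blast

lemma walk_restrict: "is_walk E w \<Longrightarrow> (\<And>i. Suc i < length w \<Longrightarrow> {w!i, w!Suc i} \<noteq> e) \<Longrightarrow> is_walk (E - {e}) w"
  unfolding is_walk_def by blast

lemma edge_idx: "distinct p \<Longrightarrow> Suc i < length p \<Longrightarrow> Suc k < length p \<Longrightarrow>
   {p!i, p!Suc i} = {p!k, p!Suc k} \<Longrightarrow> i = k"
  by (auto simp: doubleton_eq_iff nth_eq_iff_index_eq)

lemma no_bypass:
  assumes sg: "simple_graph V E" and ac: "acyclic_graph E" and e: "{a,b} \<in> E"
    and w: "is_walk (E - {{a,b}}) w" "hd w = a" "last w = b"
  shows False
proof -
  obtain c where c: "is_walk (E - {{a,b}}) c" "distinct c" "hd c = a" "last c = b"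
    using shortcut[OF w(1)] w(2,3) by auto
  have ab: "a \<noteq> b" using edge_info[OF sg e] by blast
  have cne: "c \<noteq> []" using c(1) unfolding is_walk_def by blast
  have l1: "length c \<noteq> 1"
  proof
    assume "length c = 1"
    then have "hd c = last c" by (cases c) auto
    then show False using c ab by simp
  qed
  have l2: "length c \<noteq> 2"
  proof
    assume l: "length c = 2"
    have "{c!0, c!Suc 0} \<in> E - {{a,b}}" using walk_edge_sub[OF c(1), of 0] l by simp
    moreover have "c!0 = a" using c(3) cne by (simp add: hd_conv_nth)
    moreover have "c!Suc 0 = b" using c(4) cne l by (simp add: last_conv_nth)
    ultimately show False by simp
  qed
  have "length c \<ge> 3" using l1 l2 cne by (cases "length c") auto
  moreover have "is_walk E c" using walk_mono[OF c(1)] by blast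
  moreover have "{last c, hd c} \<in> E" using c e by (simp add: insert_commute)
  ultimately have "is_cycle E c" using c(2) unfolding is_cycle_def by blast
  then show False using ac unfolding acyclic_graph_def by blast
qed



lemma path_in_walk:
  assumes sg: "simple_graph V E" and ac: "acyclic_graph E"
    and p: "is_walk E p" "distinct p" and q: "is_walk E q" "hd q = hd p" "last q = last p"
  shows "set p \<subseteq> set q"
proof
  fix x assume "x \<in> set p"
  then obtain j where j: "j < length p" "p!j = x" by (metis in_set_conv_nth)
  have pne: "p \<noteq> []" and qne: "q \<noteq> []" using p(1) q(1) unfolding is_walk_def by blast+
  show "x \<in> set q"
  proof (rule ccontr)
    assume nx: "x \<notin> set q"
    have j0: "j \<noteq> 0"
    proof
      assume "j = 0" then have "x = hd q" using j q(2) pne by (simp add: hd_conv_nth)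
      then show False using nx qne by simp
    qed
    have jl: "j \<noteq> length p - 1"
    proof
      assume "j = length p - 1" then have "x = last q" using j q(3) pne by (simp add: last_conv_nth)
      then show False using nx qne by simp
    qed
    obtain a where a: "j = Suc a" using j0 by (cases j) auto
    have aj: "Suc (Suc a) < length p" using a j jl by simp
    have sa: "Suc a < length p" using aj by simp
    define e where "e = {p!a, p!Suc a}"
    have eE: "e \<in> E" unfolding e_def using walk_edge_sub[OF p(1) sa] .
    define d where "d = drop (Suc a) p"
    have dw: "is_walk (E - {e}) d" unfolding d_def
    proof (rule walk_restrict[OF walk_drop[OF p(1) sa]])
      fix i assume i: "Suc i < length (drop (Suc a) p)"
      then have i': "Suc (Suc a + i) < length p" by simp
      show "{drop (Suc a) p ! i, drop (Suc a) p ! Suc i} \<noteq> e"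
      proof
        assume "{drop (Suc a) p ! i, drop (Suc a) p ! Suc i} = e"
        then have "{p ! (Suc a + i), p ! Suc (Suc a + i)} = {p!a, p!Suc a}"
          unfolding e_def using i by simp
        from edge_idx[OF p(2) i' sa this] show False by simp
      qed
    qed
    define t where "t = take (Suc a) p"
    have tw: "is_walk (E - {e}) t" unfolding t_def
    proof (rule walk_restrict[OF walk_take[OF p(1)]])
      fix i assume i: "Suc i < length (take (Suc a) p)"
      then have i': "Suc i < length p" "i < a" by simp_all
      show "{take (Suc a) p ! i, take (Suc a) p ! Suc i} \<noteq> e"
      proof
        assume "{take (Suc a) p ! i, take (Suc a) p ! Suc i} = e"
        then have "{p ! i, p ! Suc i} = {p!a, p!Suc a}"
          unfolding e_def using i by simp
        from edge_idx[OF p(2) i'(1) sa this] show False using i'(2) by simp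
      qed
    qed simp
    define r where "r = rev q"
    have rw: "is_walk (E - {e}) r" unfolding r_def
    proof (rule walk_restrict[OF walk_rev[OF q(1)]])
      fix i assume i: "Suc i < length (rev q)"
      have "rev q ! Suc i \<in> set q" using i by (metis nth_mem set_rev)
      moreover have "rev q ! i \<in> set q" using i by (metis Suc_lessD nth_mem set_rev)
      ultimately show "{rev q ! i, rev q ! Suc i} \<noteq> e"
      proof (intro notI)
        assume m: "rev q ! Suc i \<in> set q" "rev q ! i \<in> set q" and eq: "{rev q ! i, rev q ! Suc i} = e"
        have "x \<in> {rev q ! i, rev q ! Suc i}" using eq j a unfolding e_def by simp
        then show False using nx m by blast
      qed
    qed
    have dne: "d \<noteq> []" unfolding d_def using sa by simp
    have ld: "last d = hd r" unfolding d_def r_def using sa q(3) qne by (simp add: hd_rev)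
    have hd: "hd d = x" unfolding d_def using sa j a by (simp add: hd_drop_conv_nth)
    from walk_append[OF dw rw ld] have w1: "is_walk (E - {e}) (d @ tl r)"
      "hd (d @ tl r) = x" "last (d @ tl r) = hd p"
      using hd q(2) qne unfolding r_def by (auto simp: last_rev)
    have lt: "last (d @ tl r) = hd t" unfolding t_def using w1(3) pne by simp
    from walk_append[OF w1(1) tw lt] have w2: "is_walk (E - {e}) ((d @ tl r) @ tl t)"
      "hd ((d @ tl r) @ tl t) = x" "last ((d @ tl r) @ tl t) = p!a"
      using w1(2) sa unfolding t_def by (auto simp: take_Suc_conv_app_nth)
    have e2: "e = {x, p!a}" unfolding e_def using j a by (simp add: insert_commute)
    have "{x, p!a} \<in> E" using eE e2 by simp
    from no_bypass[OF sg ac this] w2 e2 show False by simp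
  qed
qed



lemma diam_lower:
  assumes tr: "is_tree V E" and p: "is_walk E p" "distinct p" "hd p \<in> V" "last p \<in> V"
  shows "length p \<le> Suc (diam V E)"
proof -
  have sg: "simple_graph V E" and ac: "acyclic_graph E" using tr unfolding is_tree_def by blast+
  have fV: "finite V" using sg unfolding simple_graph_def by blast
  have pne: "p \<noteq> []" using p(1) unfolding is_walk_def by blast
  let ?P = "\<lambda>n. \<exists>q. is_walk E q \<and> hd q = hd p \<and> last q = last p \<and> length q = Suc n"
  have ex: "?P (length p - 1)" using p pne by (intro exI[of _ p]) simp
  have lb: "length p \<le> Suc n" if Pn: "?P n" for n
  proof -
    obtain q where q: "is_walk E q" "hd q = hd p" "last q = last p" "length q = Suc n"
      using Pn by blast
    have "set p \<subseteq> set q" using path_in_walk[OF sg ac p(1,2) q(1,2,3)] .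
    then have "card (set p) \<le> card (set q)" by (simp add: card_mono)
    also have "\<dots> \<le> length q" by (rule card_length)
    finally show ?thesis using q(4) distinct_card[OF p(2)] by simp
  qed
  have g: "length p \<le> Suc (gdist E (hd p) (last p))" unfolding gdist_def
  proof (rule LeastI2_ex)
    show "\<exists>n. ?P n" using ex by blast
  qed (rule lb)
  let ?S = "{gdist E u v | u v. u \<in> V \<and> v \<in> V}"
  have "?S \<subseteq> (\<lambda>(u,v). gdist E u v) ` (V \<times> V)" by auto
  moreover have "finite ((\<lambda>(u,v). gdist E u v) ` (V \<times> V))" using fV by simp
  ultimately have fin: "finite ?S" by (rule finite_subset)
  have mem: "gdist E (hd p) (last p) \<in> ?S" using p by blast
  have "gdist E (hd p) (last p) \<le> diam V E" unfolding diam_def using Max_ge[OF fin mem] .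
  then show ?thesis using g by simp
qed



lemma cons_distinct:
  assumes sg: "simple_graph V E" and ac: "acyclic_graph E"
    and p: "is_walk E p" "distinct p" and e: "{x, hd p} \<in> E"
    and nb: "Suc 0 < length p \<Longrightarrow> x \<noteq> p!1"
  shows "is_walk E (x#p) \<and> distinct (x#p)"
proof -
  have pne: "p \<noteq> []" using p(1) unfolding is_walk_def by blast
  have w: "is_walk E (x#p)" using walk_Cons_iff[OF pne] e p(1) by blast
  have "x \<notin> set p"
  proof
    assume "x \<in> set p"
    then obtain j where j: "j < length p" "p!j = x" by (metis in_set_conv_nth)
    have "j \<noteq> 0"
    proof
      assume "j = 0" then show False using edge_info[OF sg e] j pne by (simp add: hd_conv_nth)
    qed
    moreover have "j \<noteq> 1" using nb j by auto
    ultimately have j2: "j \<ge> 2" by simp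
    define c where "c = take (Suc j) p"
    have "length c \<ge> 3" unfolding c_def using j j2 by simp
    moreover have "distinct c" unfolding c_def using p(2) by simp
    moreover have "is_walk E c" unfolding c_def using walk_take[OF p(1)] by simp
    moreover have "last c = x" unfolding c_def using j by (simp add: take_Suc_conv_app_nth)
    moreover have "hd c = hd p" unfolding c_def using pne by simp
    ultimately have "is_cycle E c" unfolding is_cycle_def using e by simp
    then show False using ac unfolding acyclic_graph_def by blast
  qed
  then show ?thesis using w p(2) by simp
qed



lemma edge_otherE:
  assumes "simple_graph V E" "e \<in> E" "x \<in> e"
    and "\<And>z. e = {x,z} \<Longrightarrow> z \<noteq> x \<Longrightarrow> x \<in> V \<Longrightarrow> z \<in> V \<Longrightarrow> P"
  shows P
proof -
  from edge_other[OF assms(1,2,3)] obtain z where "e = {x,z}" "z \<noteq> x" "x \<in> V" "z \<in> V"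
    by (elim exE conjE)
  then show P by (rule assms(4))
qed

lemma neg_vertex:
  assumes sg: "simple_graph V E" and nm1: "\<forall>v\<in>V. sdeg E s v \<noteq> -1"
    and u: "u \<in> V" and neg: "sdeg E s u < -1"
  shows "\<exists>a b. {u,a} \<in> E \<and> {a,b} \<in> E \<and> a \<noteq> z \<and> b \<noteq> u"
proof -
  have "E \<subseteq> Pow V"
  proof
    fix e assume "e \<in> E"
    then obtain a b where "a \<in> V" "b \<in> V" "e = {a,b}"
      using sg unfolding simple_graph_def by blast
    then show "e \<in> Pow V" by simp
  qed
  moreover have "finite V" using sg unfolding simple_graph_def by blast
  then have "finite (Pow V)" by simp
  ultimately have fE: "finite E" by (rule finite_subset)
  define N where "N = {e\<in>E. u \<in> e \<and> \<not> s e}"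
  have fN: "finite N" unfolding N_def using fE by simp
  have "int (card N) \<ge> 2" using neg unfolding sdeg_def N_def by simp
  then have c2: "card N \<ge> 2" by simp
  then have "N \<noteq> {}" by auto
  then obtain e1 where e1: "e1 \<in> N" by blast
  have cd: "card (N - {e1}) = card N - 1" using e1 fN by (simp add: card_Diff_singleton)
  have "N - {e1} \<noteq> {}"
  proof
    assume h: "N - {e1} = {}"
    have "card (N - {e1}) = 0" unfolding h by simp
    then show False using cd c2 by simp
  qed
  then obtain e2 where e2: "e2 \<in> N - {e1}" by blast
  have e12: "e1 \<in> N" "e2 \<in> N" "e1 \<noteq> e2" using e1 e2 by auto
  have e1E: "e1 \<in> E" "u \<in> e1" and e2E: "e2 \<in> E" "u \<in> e2" using e12 unfolding N_def by simp_all
  obtain w1 where w1: "e1 = {u,w1}" "w1 \<noteq> u" "u \<in> V" "w1 \<in> V"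
    by (rule edge_otherE[OF sg e1E])
  obtain w2 where w2: "e2 = {u,w2}" "w2 \<noteq> u" "u \<in> V" "w2 \<in> V"
    by (rule edge_otherE[OF sg e2E])
  have "w1 \<noteq> w2"
  proof
    assume "w1 = w2" then have "e1 = e2" using w1(1) w2(1) by simp
    then show False using e12(3) by simp
  qed
  have n1: "{u,w1} \<in> E" "\<not> s {u,w1}" using e12(1) w1(1) unfolding N_def by simp_all
  have n2: "{u,w2} \<in> E" "\<not> s {u,w2}" using e12(2) w2(1) unfolding N_def by simp_all
  obtain w where w: "{u,w} \<in> E" "\<not> s {u,w}" "w \<noteq> z"
  proof (cases "w1 = z")
    case True
    then have "w2 \<noteq> z" using \<open>w1 \<noteq> w2\<close> by simp
    then show ?thesis using that[OF n2] by simp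
  next
    case False then show ?thesis using that[OF n1] by simp
  qed
  have "\<exists>b. {w,b} \<in> E \<and> b \<noteq> u"
  proof (rule ccontr)
    assume H: "\<not> (\<exists>b. {w,b} \<in> E \<and> b \<noteq> u)"
    have all: "e = {u,w}" if ee: "e \<in> E" "w \<in> e" for e
    proof -
      obtain b where b: "e = {w,b}" "b \<noteq> w" "w \<in> V" "b \<in> V" by (rule edge_otherE[OF sg ee])
      have "b = u"
      proof (rule ccontr)
        assume "b \<noteq> u"
        moreover have "{w,b} \<in> E" using b(1) ee(1) by simp
        ultimately have "\<exists>b. {w,b} \<in> E \<and> b \<noteq> u" by (intro exI[of _ b]) simp
        then show False using H by simp
      qed
      then show ?thesis using b(1) by (simp add: insert_commute)
    qed
    have P: "{e\<in>E. w \<in> e \<and> s e} = {}"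
    proof (rule equals0I)
      fix e assume "e \<in> {e\<in>E. w \<in> e \<and> s e}"
      then have "e \<in> E" "w \<in> e" "s e" by simp_all
      then show False using all[of e] w(2) by simp
    qed
    have Q: "{e\<in>E. w \<in> e \<and> \<not> s e} = {{u,w}}"
    proof
      show "{e\<in>E. w \<in> e \<and> \<not> s e} \<subseteq> {{u,w}}"
      proof
        fix e assume "e \<in> {e\<in>E. w \<in> e \<and> \<not> s e}"
        then have "e \<in> E" "w \<in> e" by simp_all
        then show "e \<in> {{u,w}}" using all[of e] by simp
      qed
      show "{{u,w}} \<subseteq> {e\<in>E. w \<in> e \<and> \<not> s e}" using w(1,2) by simp
    qed
    have "sdeg E s w = -1" unfolding sdeg_def P Q by simp
    moreover have "w \<in> V" using edge_info[OF sg w(1)] by simp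
    moreover have "sdeg E s w \<noteq> -1" using nm1 \<open>w \<in> V\<close> by simp
    ultimately show False by simp
  qed
  then obtain b where b: "{w,b} \<in> E" "b \<noteq> u" by (elim exE conjE)
  show ?thesis by (intro exI[of _ w] exI[of _ b]) (simp add: w b)
qed



lemma long_pair:
  assumes tr: "is_tree V E" and nm1: "\<forall>v\<in>V. sdeg E s v \<noteq> -1"
    and u: "u \<in> V" "sdeg E s u < -1" and v: "v \<in> V" "sdeg E s v < -1"
    and p: "is_walk E p" "distinct p" "hd p = u" "last p = v" "2 \<le> length p"
  shows "length p + 3 \<le> diam V E"
proof -
  have sg: "simple_graph V E" and ac: "acyclic_graph E" using tr unfolding is_tree_def by blast+
  have pne: "p \<noteq> []" using p(5) by auto
  from neg_vertex[OF sg nm1 u, of "p!1"] obtain a b where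
    ab: "{u,a} \<in> E" "{a,b} \<in> E" "a \<noteq> p!1" "b \<noteq> u" by (elim exE conjE)
  have e1: "{a, hd p} \<in> E" using ab(1) p(3) by (simp add: insert_commute)
  have nb1: "Suc 0 < length p \<Longrightarrow> a \<noteq> p!1" using ab(3) by simp
  have A: "is_walk E (a#p)" "distinct (a#p)" using cons_distinct[OF sg ac p(1,2) e1 nb1] by simp_all
  have e2: "{b, hd (a#p)} \<in> E" using ab(2) by (simp add: insert_commute)
  have nb2: "Suc 0 < length (a#p) \<Longrightarrow> b \<noteq> (a#p)!1" using ab(4) p(3) pne by (simp add: hd_conv_nth)
  have B: "is_walk E (b#a#p)" "distinct (b#a#p)" using cons_distinct[OF sg ac A e2 nb2] by simp_all
  define r where "r = rev (b#a#p)"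
  have R: "is_walk E r" "distinct r" unfolding r_def using walk_rev[OF B(1)] B(2) by auto
  have hr: "hd r = v" unfolding r_def using p(4) pne by (simp add: hd_rev)
  have lr: "last r = b" unfolding r_def by (simp add: last_rev)
  obtain k where k: "length p = Suc (Suc k)" using p(5) by (metis add_2_eq_Suc le_Suc_ex)
  have "r ! 1 = rev p ! 1" unfolding r_def using k by (simp add: nth_append)
  also have "\<dots> = p ! (length p - 2)" using k by (simp add: rev_nth)
  finally have r1: "r ! 1 = p ! (length p - 2)" .
  from neg_vertex[OF sg nm1 v, of "p!(length p - 2)"] obtain c d where
    cd: "{v,c} \<in> E" "{c,d} \<in> E" "c \<noteq> p!(length p - 2)" "d \<noteq> v" by (elim exE conjE)
  have e3: "{c, hd r} \<in> E" using cd(1) hr by (simp add: insert_commute)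
  have nb3: "Suc 0 < length r \<Longrightarrow> c \<noteq> r!1" using cd(3) r1 by simp
  have C: "is_walk E (c#r)" "distinct (c#r)" using cons_distinct[OF sg ac R e3 nb3] by simp_all
  have rne: "r \<noteq> []" unfolding r_def by simp
  have e4: "{d, hd (c#r)} \<in> E" using cd(2) by (simp add: insert_commute)
  have nb4: "Suc 0 < length (c#r) \<Longrightarrow> d \<noteq> (c#r)!1" using cd(4) hr rne by (simp add: hd_conv_nth)
  have F: "is_walk E (d#c#r)" "distinct (d#c#r)" using cons_distinct[OF sg ac C e4 nb4] by simp_all
  have dV: "d \<in> V" using edge_info[OF sg cd(2)] by simp
  have bV: "b \<in> V" using edge_info[OF sg ab(2)] by simp
  have "length (d#c#r) \<le> Suc (diam V E)"
    using diam_lower[OF tr F] dV bV lr rne by simp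
  moreover have "length (d#c#r) = length p + 4" unfolding r_def by simp
  ultimately show ?thesis by simp
qed

lemma single_neg:
  assumes tr: "is_tree V E" and nm1: "\<forall>v\<in>V. sdeg E s v \<noteq> -1"
    and v: "v \<in> V" "sdeg E s v < -1"
  shows "4 \<le> diam V E"
proof -
  have sg: "simple_graph V E" and ac: "acyclic_graph E" using tr unfolding is_tree_def by blast+
  from neg_vertex[OF sg nm1 v, of v] obtain a b where
    ab: "{v,a} \<in> E" "{a,b} \<in> E" "b \<noteq> v" by (elim exE conjE)
  have P0: "is_walk E [v]" "distinct [v]" by (simp_all add: walk_single)
  have e1: "{a, hd [v]} \<in> E" using ab(1) by (simp add: insert_commute)
  have nb1: "Suc 0 < length [v] \<Longrightarrow> a \<noteq> [v]!1" by simp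
  have A: "is_walk E [a,v]" "distinct [a,v]" using cons_distinct[OF sg ac P0 e1 nb1] by simp_all
  have e2: "{b, hd [a,v]} \<in> E" using ab(2) by (simp add: insert_commute)
  have nb2: "Suc 0 < length [a,v] \<Longrightarrow> b \<noteq> [a,v]!1" using ab(3) by simp
  have B: "is_walk E [b,a,v]" "distinct [b,a,v]" using cons_distinct[OF sg ac A e2 nb2] by simp_all
  have R: "is_walk E [v,a,b]" "distinct [v,a,b]" using walk_rev[OF B(1)] B(2) by auto
  from neg_vertex[OF sg nm1 v, of a] obtain c d where
    cd: "{v,c} \<in> E" "{c,d} \<in> E" "c \<noteq> a" "d \<noteq> v" by (elim exE conjE)
  have e3: "{c, hd [v,a,b]} \<in> E" using cd(1) by (simp add: insert_commute)
  have nb3: "Suc 0 < length [v,a,b] \<Longrightarrow> c \<noteq> [v,a,b]!1" using cd(3) by simp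
  have C: "is_walk E [c,v,a,b]" "distinct [c,v,a,b]" using cons_distinct[OF sg ac R e3 nb3] by simp_all
  have e4: "{d, hd [c,v,a,b]} \<in> E" using cd(2) by (simp add: insert_commute)
  have nb4: "Suc 0 < length [c,v,a,b] \<Longrightarrow> d \<noteq> [c,v,a,b]!1" using cd(4) by simp
  have F: "is_walk E [d,c,v,a,b]" "distinct [d,c,v,a,b]" using cons_distinct[OF sg ac C e4 nb4] by simp_all
  have dV: "d \<in> V" using edge_info[OF sg cd(2)] by simp
  have bV: "b \<in> V" using edge_info[OF sg ab(2)] by simp
  have "length [d,c,v,a,b] \<le> Suc (diam V E)"
    using diam_lower[OF tr F] dV bV by simp
  then show ?thesis by simp
qed

lemma get_path:
  assumes tr: "is_tree V E" and uv: "u \<in> V" "v \<in> V" "u \<noteq> v"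
  shows "\<exists>p. is_walk E p \<and> distinct p \<and> hd p = u \<and> last p = v \<and> 2 \<le> length p"
proof -
  have cn: "connected_graph V E" using tr unfolding is_tree_def by blast
  from cn uv obtain q where q: "is_walk E q" "hd q = u" "last q = v"
    unfolding connected_graph_def by blast
  from shortcut[OF q(1)] obtain p where p: "is_walk E p" "distinct p" "hd p = hd q" "last p = last q"
    by (elim exE conjE)
  have pne: "p \<noteq> []" using p(1) unfolding is_walk_def by blast
  have "length p \<noteq> 1"
  proof
    assume "length p = 1"
    then have "hd p = last p" by (cases p) auto
    then show False using p q uv by simp
  qed
  then have "2 \<le> length p" using pne by (cases "length p") auto
  then show ?thesis using p q by (intro exI[of _ p]) simp
qed

lemma len2_edge: "is_walk E p \<Longrightarrow> length p = 2 \<Longrightarrow> {hd p, last p} \<in> E"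
proof -
  assume w: "is_walk E p" and l: "length p = 2"
  have "{p!0, p!Suc 0} \<in> E" using walk_edge_sub[OF w, of 0] l by simp
  moreover have "p \<noteq> []" using l by auto
  ultimately show ?thesis using l by (simp add: hd_conv_nth last_conv_nth)
qed

theorem mainTheorem5:
  fixes V :: "'a set" and E :: "'a set set" and s :: "'a set \<Rightarrow> bool"
    and m :: nat and y :: "nat \<Rightarrow> int" and D :: "int set"
  assumes "m \<ge> 1"
    and "inj_on y {1..m}"
    and "\<forall>i\<in>{1..m}. y i < -1"
    and "D = insert 1 (y ` {1..m})"
    and "is_tree V E"
    and "realizes V E s D"
  shows "(m = 1 \<longrightarrow> diam V E \<ge> 4) \<and> (m = 2 \<longrightarrow> diam V E \<ge> 5) \<and> (m > 2 \<longrightarrow> diam V E \<ge> 6)"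
proof -
  have tr: "is_tree V E" by (rule assms(5))
  have sg: "simple_graph V E" and ac: "acyclic_graph E" using tr unfolding is_tree_def by blast+
  have DV: "D = sdeg E s ` V" using assms(6) unfolding realizes_def by simp
  have nm1: "\<forall>v\<in>V. sdeg E s v \<noteq> -1"
  proof
    fix v assume v: "v \<in> V"
    then have "sdeg E s v \<in> D" using DV by simp
    then have "sdeg E s v = 1 \<or> sdeg E s v \<in> y ` {1..m}" using assms(4) by simp
    then show "sdeg E s v \<noteq> -1" using assms(3) by auto
  qed
  have vert: "\<exists>v\<in>V. sdeg E s v = y i" if i: "i \<in> {1..m}" for i
  proof -
    have "y i \<in> D" using assms(4) i by simp
    then have "y i \<in> sdeg E s ` V" using DV by simp
    then show ?thesis by (metis imageE)
  qed
  have m1: "1 \<in> {1..m}" using assms(1) by simp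
  obtain u where u: "u \<in> V" "sdeg E s u = y 1" using vert[OF m1] by blast
  have un: "sdeg E s u < -1" using u assms(3) m1 by simp
  have d4: "4 \<le> diam V E" by (rule single_neg[OF tr nm1 u(1) un])
  have d5: "5 \<le> diam V E" if m2: "m \<ge> 2"
  proof -
    have i2: "2 \<in> {1..m}" using m2 by simp
    obtain v where v: "v \<in> V" "sdeg E s v = y 2" using vert[OF i2] by blast
    have vn: "sdeg E s v < -1" using v assms(3) i2 by simp
    have "y 1 \<noteq> y 2" using assms(2) m1 i2 by (metis inj_on_eq_iff numeral_One numeral_eq_iff semiring_norm(85))
    then have "u \<noteq> v" using u v by auto
    from get_path[OF tr u(1) v(1) this] obtain p where
      p: "is_walk E p" "distinct p" "hd p = u" "last p = v" "2 \<le> length p" by (elim exE conjE)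
    have "length p + 3 \<le> diam V E" by (rule long_pair[OF tr nm1 u(1) un v(1) vn p])
    then show ?thesis using p(5) by simp
  qed
  have d6: "6 \<le> diam V E" if m3: "m > 2"
  proof (rule ccontr)
    assume H: "\<not> 6 \<le> diam V E"
    have short: "length p = 2"
      if a: "a \<in> V" "sdeg E s a < -1" and b: "b \<in> V" "sdeg E s b < -1"
        and p: "is_walk E p" "distinct p" "hd p = a" "last p = b" "2 \<le> length p" for a b p
    proof -
      have "length p + 3 \<le> diam V E" by (rule long_pair[OF tr nm1 a b p])
      then show ?thesis using H p(5) by simp
    qed
    have i2: "2 \<in> {1..m}" and i3: "3 \<in> {1..m}" using m3 by simp_all
    obtain v where v: "v \<in> V" "sdeg E s v = y 2" using vert[OF i2] by blast
    obtain w where w: "w \<in> V" "sdeg E s w = y 3" using vert[OF i3] by blast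
    have vn: "sdeg E s v < -1" using v assms(3) i2 by simp
    have wn: "sdeg E s w < -1" using w assms(3) i3 by simp
    have "y 1 \<noteq> y 2" "y 1 \<noteq> y 3" "y 2 \<noteq> y 3" using assms(2) m1 i2 i3
      by (simp_all add: inj_on_eq_iff)
    then have uv: "u \<noteq> v" and uw: "u \<noteq> w" and vw: "v \<noteq> w" using u v w by auto
    from get_path[OF tr u(1) v(1) uv] obtain p1 where
      p1: "is_walk E p1" "distinct p1" "hd p1 = u" "last p1 = v" "2 \<le> length p1" by (elim exE conjE)
    from get_path[OF tr v(1) w(1) vw] obtain p2 where
      p2: "is_walk E p2" "distinct p2" "hd p2 = v" "last p2 = w" "2 \<le> length p2" by (elim exE conjE)
    from get_path[OF tr w(1) u(1) uw[symmetric]] obtain p3 where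
      p3: "is_walk E p3" "distinct p3" "hd p3 = w" "last p3 = u" "2 \<le> length p3" by (elim exE conjE)
    have E1: "{u,v} \<in> E" using len2_edge[OF p1(1) short[OF u(1) un v(1) vn p1]] p1 by simp
    have E2: "{v,w} \<in> E" using len2_edge[OF p2(1) short[OF v(1) vn w(1) wn p2]] p2 by simp
    have E3: "{w,u} \<in> E" using len2_edge[OF p3(1) short[OF w(1) wn u(1) un p3]] p3 by simp
    have "is_walk E [w]" by (rule walk_single)
    then have "is_walk E [v,w]" using walk_Cons_iff[of "[w]" E v] E2 by simp
    then have W: "is_walk E [u,v,w]" using walk_Cons_iff[of "[v,w]" E u] E1 by simp
    have "is_cycle E [u,v,w]" unfolding is_cycle_def using W E3 uv uw vw by simp
    then show False using ac unfolding acyclic_graph_def by blast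
  qed
  show ?thesis using d4 d5 d6 by simp
qed

end
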